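(* Let $V$ be a finite-dimensional vector space over an algebraically closed field $\mathbf{k}$ of characteristic $p$, of dimension $\mathbf{n}\ge3$, equipped with a bilinear form $(,)$ and a quadratic form $Q$ such that either (i) $Q=0$, $(x,x)=0$ for all $x$, and $V^\perp=0$; or (ii) $Q\ne0$, $(x,y)=Q(x+y)-Q(x)-Q(y)$ for all $x,y$, and $Q|_{V^\perp}$ is injective. Let $\kappa\in\{0,1\}$ with $\mathbf{n}-\kappa$ even, $n=(\mathbf{n}-\kappa)/2$. Let $p_1\ge p_2\ge\dots\ge p_\sigma\ge1$ be integers with $p_1+\dots+p_\sigma=n$, and if $\kappa=1$ set $p_{\sigma+1}=1/2$. Let $g\in Is(V)$ and let $(w^t_i)_{t\in[1,\sigma+\kappa],i\in\mathbb{Z}}$ be a $(g,p_* )$-adapted collection. Then $\{w^x_i;\ x\in[1,\sigma+\kappa],\ i\in[0,2p_x-1]\}$ is a basis of $V$.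
   Context: $V^\perp=\{x\in V;(x,V)=0\}$. $Is(V)$ is the group of $g\in GL(V)$ with $(gx,gy)=(x,y)$ and $Q(gx)=Q(x)$ for all $x,y$. A collection of vectors $w^t_i\in V$ ($t\in[1,\sigma+\kappa]$, $i\in\mathbb{Z}$) is $(g,p_* )$-adapted if: (a) $w^t_{i+1}=gw^t_i$ for all $t,i$; (b) for $t\in[1,\sigma]$, $(w^t_i,w^t_j)=0$ if $|i-j|<p_t$ and $(w^t_i,w^t_j)=1$ if $j-i=p_t$; (c) $(w^t_i,w^r_j)=0$ if $0\le i-j+p_r<2p_t$ and $1\le t<r\le\sigma$; (d) if $\kappa=1$, $(w^{\sigma+1}_i,w^{\sigma+1}_i)=2$ for all $i$; (e) if $\kappa=1$, $(w^t_i,w^{\sigma+1}_j)=0$ whenever $0\le i-j<2p_t$ and $1\le t\le\sigma$; (f) $Q(w^t_i)=0$ for $t\in[1,\sigma]$, and $Q(w^{\sigma+1}_i)=1$ if $\kappa=1$. *)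

theory Defs
  imports Main "HOL-Computational_Algebra.Polynomial"
begin

definition alg_closed :: "'k::field itself \<Rightarrow> bool" where
  "alg_closed _ \<longleftrightarrow> (\<forall>f :: 'k poly. degree f > 0 \<longrightarrow> (\<exists>x. poly f x = 0))"

definition bilinear_form :: "('k::field \<Rightarrow> 'v::ab_group_add \<Rightarrow> 'v) \<Rightarrow> ('v \<Rightarrow> 'v \<Rightarrow> 'k) \<Rightarrow> bool" where
  "bilinear_form scale B \<longleftrightarrow>
     (\<forall>x y z. B (x + y) z = B x z + B y z) \<and>
     (\<forall>x y z. B x (y + z) = B x y + B x z) \<and>
     (\<forall>a x y. B (scale a x) y = a * B x y) \<and>
     (\<forall>a x y. B x (scale a y) = a * B x y)"

definition quadratic_form :: "('k::field \<Rightarrow> 'v::ab_group_add \<Rightarrow> 'v) \<Rightarrow> ('v \<Rightarrow> 'k) \<Rightarrow> bool" where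
  "quadratic_form scale Q \<longleftrightarrow>
     (\<forall>a x. Q (scale a x) = a^2 * Q x) \<and>
     bilinear_form scale (\<lambda>x y. Q (x + y) - Q x - Q y)"

definition perp_space :: "('v \<Rightarrow> 'v \<Rightarrow> 'k::zero) \<Rightarrow> 'v set" where
  "perp_space B = {x. \<forall>y. B x y = 0}"

definition isom_group :: "('k::field \<Rightarrow> 'v::ab_group_add \<Rightarrow> 'v) \<Rightarrow> ('v \<Rightarrow> 'v \<Rightarrow> 'k) \<Rightarrow> ('v \<Rightarrow> 'k) \<Rightarrow> ('v \<Rightarrow> 'v) set" where
  "isom_group scale B Q = {g. Vector_Spaces.linear scale scale g \<and> bij g \<and>
      (\<forall>x y. B (g x) (g y) = B x y) \<and> (\<forall>x. Q (g x) = Q x)}"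

definition adapted ::
  "('v \<Rightarrow> 'v \<Rightarrow> 'k::field) \<Rightarrow> ('v \<Rightarrow> 'k) \<Rightarrow> ('v \<Rightarrow> 'v) \<Rightarrow> nat \<Rightarrow> nat \<Rightarrow> (nat \<Rightarrow> nat) \<Rightarrow> (nat \<Rightarrow> int \<Rightarrow> 'v) \<Rightarrow> bool" where
  "adapted B Q g \<sigma> \<kappa> p w \<longleftrightarrow>
     (\<forall>t\<in>{1..\<sigma>+\<kappa>}. \<forall>i. w t (i + 1) = g (w t i)) \<and>
     (\<forall>t\<in>{1..\<sigma>}. \<forall>i j. \<bar>i - j\<bar> < int (p t) \<longrightarrow> B (w t i) (w t j) = 0) \<and>
     (\<forall>t\<in>{1..\<sigma>}. \<forall>i j. j - i = int (p t) \<longrightarrow> B (w t i) (w t j) = 1) \<and>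
     (\<forall>t r i j. 1 \<le> t \<and> t < r \<and> r \<le> \<sigma> \<and> 0 \<le> i - j + int (p r) \<and> i - j + int (p r) < 2 * int (p t)
         \<longrightarrow> B (w t i) (w r j) = 0) \<and>
     (\<kappa> = 1 \<longrightarrow> (\<forall>i. B (w (\<sigma>+1) i) (w (\<sigma>+1) i) = 2)) \<and>
     (\<kappa> = 1 \<longrightarrow> (\<forall>t\<in>{1..\<sigma>}. \<forall>i j. 0 \<le> i - j \<and> i - j < 2 * int (p t) \<longrightarrow> B (w t i) (w (\<sigma>+1) j) = 0)) \<and>
     (\<forall>t\<in>{1..\<sigma>}. \<forall>i. Q (w t i) = 0) \<and>
     (\<kappa> = 1 \<longrightarrow> (\<forall>i. Q (w (\<sigma>+1) i) = 1))"

text \<open>Index set {(x,i). x \<in> [1,sigma+kappa], i \<in> [0, 2 p_x - 1]} with p_(sigma+1) = 1/2.\<close>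
definition adapted_index :: "nat \<Rightarrow> nat \<Rightarrow> (nat \<Rightarrow> nat) \<Rightarrow> (nat \<times> int) set" where
  "adapted_index \<sigma> \<kappa> p =
     {(t, i). 1 \<le> t \<and> t \<le> \<sigma> \<and> 0 \<le> i \<and> i \<le> 2 * int (p t) - 1}
     \<union> (if \<kappa> = 1 then {(\<sigma>+1, 0)} else {})"

end

theory Submission
  imports Defs "HOL-Library.Product_Lexorder"
begin

definition key :: "nat \<Rightarrow> int \<Rightarrow> int \<Rightarrow> int \<times> int" where
  "key t i pt = (\<bar>2*i - 2*pt + 1\<bar>, if 2*i - 2*pt + 1 < 0 then int t else - int t)"

lemma arith_key:
  fixes t r :: nat and i b pt pr :: int
  assumes "0 \<le> i" "i < 2*pt" "0 \<le> b" "b < 2*pr" "pt \<ge> 1" "pr \<ge> 1"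
    "t < r \<Longrightarrow> pr \<le> pt" "r < t \<Longrightarrow> pt \<le> pr" "t = r \<Longrightarrow> pt = pr"
    "(t,i) \<noteq> (r,b)" "\<not> key r b pr < key t i pt"
    "j = (if b < pr then b + pr else b - pr)"
  shows "(t=r \<and> \<bar>i-j\<bar> < pt) \<or> (t<r \<and> 0\<le>i-j+pr \<and> i-j+pr<2*pt) \<or> (r<t \<and> 0 \<le> j-i+pt \<and> j-i+pt < 2*pr)"
proof -
  consider "t < r" | "t = r" | "r < t" by linarith
  then show ?thesis
  proof cases
    case 1 then show ?thesis using assms unfolding key_def less_prod_def
      by (simp split: if_splits add: abs_if; arith)
  next
    case 2 then show ?thesis using assms unfolding key_def less_prod_def
      by (simp split: if_splits add: abs_if; arith)
  next
    case 3 then show ?thesis using assms unfolding key_def less_prod_def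
      by (simp split: if_splits add: abs_if; arith)
  qed
qed

lemma B_zero_left:
  assumes "bilinear_form scale B"
  shows "B 0 y = 0"
proof -
  have "B (0 + 0) y = B 0 y + B 0 y" using assms unfolding bilinear_form_def by blast
  then have "B 0 y + 0 = B 0 y + B 0 y" by simp
  then have "0 = B 0 y" by (simp only: add_left_cancel)
  thus ?thesis by simp
qed

lemma B_sum_left:
  assumes "bilinear_form scale B" "finite A"
  shows "B (\<Sum>x\<in>A. scale (c x) (v x)) y = (\<Sum>x\<in>A. c x * B (v x) y)"
  using assms(2)
proof (induction A rule: finite_induct)
  case empty
  then show ?case using B_zero_left[OF assms(1)] by simp
next
  case (insert a A)
  have "B (\<Sum>x\<in>insert a A. scale (c x) (v x)) y = B (scale (c a) (v a) + (\<Sum>x\<in>A. scale (c x) (v x))) y"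
    using insert by simp
  also have "\<dots> = c a * B (v a) y + B (\<Sum>x\<in>A. scale (c x) (v x)) y"
    using assms(1) unfolding bilinear_form_def by simp
  finally show ?case using insert by simp
qed

lemma p_mono:
  fixes p :: "nat \<Rightarrow> nat" and t d \<sigma> :: nat
  assumes "\<forall>t. 1 \<le> t \<and> t < \<sigma> \<longrightarrow> p t \<ge> p (t + 1)"
  shows "1 \<le> t \<Longrightarrow> t + d \<le> \<sigma> \<Longrightarrow> p (t + d) \<le> (p t :: nat)"
proof (induction d)
  case 0 then show ?case by simp
next
  case (Suc d)
  then have "p (t + d + 1) \<le> p (t + d)" using assms by simp
  with Suc show ?case by simp
qed

theorem mainTheorem3:
  fixes scale :: "'k::field \<Rightarrow> 'v::ab_group_add \<Rightarrow> 'v"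
    and B :: "'v \<Rightarrow> 'v \<Rightarrow> 'k" and Q :: "'v \<Rightarrow> 'k"
    and N \<kappa> n \<sigma> :: nat and p :: "nat \<Rightarrow> nat"
    and g :: "'v \<Rightarrow> 'v" and w :: "nat \<Rightarrow> int \<Rightarrow> 'v"
  assumes "alg_closed TYPE('k)"
    and "vector_space scale"
    and "\<exists>S. finite S \<and> module.span scale S = UNIV"
    and "vector_space.dim scale (UNIV :: 'v set) = N"
    and "N \<ge> 3"
    and "bilinear_form scale B"
    and "quadratic_form scale Q"
    and "(Q = (\<lambda>_. 0) \<and> (\<forall>x. B x x = 0) \<and> perp_space B = {0})
         \<or> (Q \<noteq> (\<lambda>_. 0) \<and> (\<forall>x y. B x y = Q (x + y) - Q x - Q y) \<and> inj_on Q (perp_space B))"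
    and "\<kappa> \<in> {0, 1}"
    and "even (N - \<kappa>)"
    and "n = (N - \<kappa>) div 2"
    and "\<forall>t. 1 \<le> t \<and> t < \<sigma> \<longrightarrow> p t \<ge> p (t + 1)"
    and "\<forall>t\<in>{1..\<sigma>}. p t \<ge> 1"
    and "(\<Sum>t=1..\<sigma>. p t) = n"
    and "g \<in> isom_group scale B Q"
    and "adapted B Q g \<sigma> \<kappa> p w"
  shows "inj_on (\<lambda>(t, i). w t i) (adapted_index \<sigma> \<kappa> p)
         \<and> \<not> module.dependent scale ((\<lambda>(t, i). w t i) ` adapted_index \<sigma> \<kappa> p)
         \<and> module.span scale ((\<lambda>(t, i). w t i) ` adapted_index \<sigma> \<kappa> p) = UNIV"
proof -
  interpret V: vector_space scale by fact
  note adp = assms(16)[unfolded adapted_def]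
  have shiftW: "\<forall>t\<in>{1..\<sigma>+\<kappa>}. \<forall>i. w t (i + 1) = g (w t i)" using adp by blast
  have Bnear: "\<And>t i j. t\<in>{1..\<sigma>} \<Longrightarrow> \<bar>i - j\<bar> < int (p t) \<Longrightarrow> B (w t i) (w t j) = 0"
    using adp by blast
  have Bone: "\<And>t i j. t\<in>{1..\<sigma>} \<Longrightarrow> j - i = int (p t) \<Longrightarrow> B (w t i) (w t j) = 1"
    using adp by blast
  have Bcross: "\<And>t r i j. 1 \<le> t \<Longrightarrow> t < r \<Longrightarrow> r \<le> \<sigma> \<Longrightarrow> 0 \<le> i - j + int (p r)
      \<Longrightarrow> i - j + int (p r) < 2 * int (p t) \<Longrightarrow> B (w t i) (w r j) = 0"
    using adp by blast
  have Bu: "\<And>t i j. \<kappa> = 1 \<Longrightarrow> t\<in>{1..\<sigma>} \<Longrightarrow> 0 \<le> i - j \<Longrightarrow> i - j < 2 * int (p t)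
      \<Longrightarrow> B (w t i) (w (\<sigma>+1) j) = 0"
    using adp by blast
  have Qu: "\<And>i. \<kappa> = 1 \<Longrightarrow> Q (w (\<sigma>+1) i) = 1" using adp by blast
  note bil = assms(6)[unfolded bilinear_form_def]
  have flip: "\<And>x y. B x y = 0 \<Longrightarrow> B y x = 0"
  proof -
    fix x y assume h: "B x y = 0"
    from assms(8) show "B y x = 0"
    proof
      assume c: "Q = (\<lambda>_. 0) \<and> (\<forall>x. B x x = 0) \<and> perp_space B = {0}"
      have "B (x + y) (x + y) = B x x + B x y + (B y x + B y y)"
        using bil by simp
      with c h show ?thesis by simp
    next
      assume c: "Q \<noteq> (\<lambda>_. 0) \<and> (\<forall>x y. B x y = Q (x + y) - Q x - Q y) \<and> inj_on Q (perp_space B)"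
      then have "B y x = B x y" by (simp add: add.commute)
      with h show ?thesis by simp
    qed
  qed
  have pmono: "\<And>t r. 1 \<le> t \<Longrightarrow> t \<le> r \<Longrightarrow> r \<le> \<sigma> \<Longrightarrow> p r \<le> p t"
  proof -
    fix t r :: nat assume "1 \<le> t" "t \<le> r" "r \<le> \<sigma>"
    then show "p r \<le> p t" using p_mono[OF assms(12), of t "r - t"] by simp
  qed
  define J where "J = {(t, i). 1 \<le> t \<and> t \<le> \<sigma> \<and> 0 \<le> i \<and> i \<le> 2 * int (p t) - 1}"
  define U where "U = (if \<kappa> = 1 then {(\<sigma>+1, 0::int)} else {})"
  have I_eq: "adapted_index \<sigma> \<kappa> p = J \<union> U" unfolding adapted_index_def J_def U_def by simp
  have JU: "J \<inter> U = {}" unfolding J_def U_def by auto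
  define pt where "pt = (\<lambda>(t::nat, b::int). (t, if b < int (p t) then b + int (p t) else b - int (p t)))"
  define kf where "kf = (\<lambda>(t::nat, i::int). key t i (int (p t)))"
  define W where "W = (\<lambda>(t::nat, i::int). w t i)"
  have ptJ: "\<And>z. z \<in> J \<Longrightarrow> pt z \<in> J" unfolding pt_def J_def by auto
  have edge: "\<And>x z. x \<in> J \<Longrightarrow> z \<in> J \<Longrightarrow> x \<noteq> z \<Longrightarrow> \<not> kf z < kf x \<Longrightarrow> B (W x) (W (pt z)) = 0"
  proof -
    fix x z assume xJ: "x \<in> J" and zJ: "z \<in> J" and ne: "x \<noteq> z" and k: "\<not> kf z < kf x"
    obtain t i where x: "x = (t, i)" by force
    obtain r b where z: "z = (r, b)" by force
    define j where "j = (if b < int (p r) then b + int (p r) else b - int (p r))"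
    have rng: "1 \<le> t" "t \<le> \<sigma>" "0 \<le> i" "i < 2 * int (p t)" "1 \<le> r" "r \<le> \<sigma>" "0 \<le> b" "b < 2 * int (p r)"
      using xJ zJ unfolding x z J_def by auto
    have p1: "int (p t) \<ge> 1" "int (p r) \<ge> 1" using assms(13) rng by auto
    have m1: "t < r \<Longrightarrow> int (p r) \<le> int (p t)" using pmono rng by simp
    have m2: "r < t \<Longrightarrow> int (p t) \<le> int (p r)" using pmono rng by simp
    have Z: "(t=r \<and> \<bar>i-j\<bar> < int (p t)) \<or> (t<r \<and> 0\<le>i-j+int (p r) \<and> i-j+int (p r)<2*int (p t))
        \<or> (r<t \<and> 0 \<le> j-i+int (p t) \<and> j-i+int (p t) < 2*int (p r))"
      by (rule arith_key[OF rng(3,4,7,8) p1 m1 m2 _ _ _ j_def])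
         (use ne k in \<open>auto simp: x z kf_def\<close>)
    have "B (w t i) (w r j) = 0"
    proof -
      consider "t=r \<and> \<bar>i-j\<bar> < int (p t)" | "t<r \<and> 0\<le>i-j+int (p r) \<and> i-j+int (p r)<2*int (p t)"
        | "r<t \<and> 0 \<le> j-i+int (p t) \<and> j-i+int (p t) < 2*int (p r)" using Z by blast
      then show ?thesis
      proof cases
        case 1 then show ?thesis using Bnear rng by auto
      next
        case 2 then show ?thesis using Bcross rng by auto
      next
        case 3 then have "B (w r j) (w t i) = 0" using Bcross rng by auto
        then show ?thesis by (rule flip)
      qed
    qed
    then show "B (W x) (W (pt z)) = 0" unfolding W_def pt_def x z j_def by simp
  qed
  have diag: "\<And>z. z \<in> J \<Longrightarrow> B (W z) (W (pt z)) \<noteq> 0"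
  proof -
    fix z assume zJ: "z \<in> J"
    obtain r b where z: "z = (r, b)" by force
    have rng: "r \<in> {1..\<sigma>}" using zJ unfolding z J_def by auto
    show "B (W z) (W (pt z)) \<noteq> 0"
    proof (cases "b < int (p r)")
      case True
      have "B (w r b) (w r (b + int (p r))) = 1" using Bone[OF rng] by simp
      then show ?thesis using True unfolding W_def pt_def z by simp
    next
      case False
      have "B (w r (b - int (p r))) (w r b) = 1" using Bone[OF rng] by simp
      then have "B (w r b) (w r (b - int (p r))) \<noteq> 0" using flip by force
      then show ?thesis using False unfolding W_def pt_def z by simp
    qed
  qed
  have uorth: "\<And>x z. x \<in> U \<Longrightarrow> z \<in> J \<Longrightarrow> B (W x) (W (pt z)) = 0"
  proof -
    fix x z assume xU: "x \<in> U" and zJ: "z \<in> J"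
    have k1: "\<kappa> = 1" and x: "x = (\<sigma>+1, 0)" using xU unfolding U_def by (auto split: if_splits)
    have "pt z \<in> J" using ptJ zJ by blast
    then obtain r j where pz: "pt z = (r, j)" and r: "r \<in> {1..\<sigma>}" "0 \<le> j" "j < 2 * int (p r)"
      unfolding J_def by auto
    have "B (w r j) (w (\<sigma>+1) 0) = 0" using Bu[OF k1 r(1)] r by simp
    then show "B (W x) (W (pt z)) = 0" using flip unfolding W_def x pz by auto
  qed
  have finJ: "finite J"
  proof -
    have "J \<subseteq> {1..\<sigma>} \<times> {0..2 * int (Max (p ` {1..\<sigma>}))}"
    proof
      fix x assume "x \<in> J"
      then obtain t i where x: "x = (t, i)" "1 \<le> t" "t \<le> \<sigma>" "0 \<le> i" "i \<le> 2 * int (p t) - 1"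
        unfolding J_def by auto
      have "p t \<le> Max (p ` {1..\<sigma>})" using x by (intro Max_ge) auto
      then have "int (p t) \<le> int (Max (p ` {1..\<sigma>}))" by simp
      then have "i \<le> 2 * int (Max (p ` {1..\<sigma>}))" using x(5) by linarith
      then show "x \<in> {1..\<sigma>} \<times> {0..2 * int (Max (p ` {1..\<sigma>}))}" using x by auto
    qed
    then show ?thesis by (rule finite_subset) auto
  qed
  have finU: "finite U" unfolding U_def by auto
  have finI: "finite (adapted_index \<sigma> \<kappa> p)" using I_eq finJ finU by simp
  have u_nz: "\<And>x. x \<in> U \<Longrightarrow> W x \<noteq> 0"
  proof -
    fix x assume xU: "x \<in> U"
    have k1: "\<kappa> = 1" and x: "x = (\<sigma>+1, 0)" using xU unfolding U_def by (auto split: if_splits)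
    have "Q (scale 0 0) = 0^2 * Q 0" using assms(7) unfolding quadratic_form_def by blast
    then have "Q 0 = 0" by simp
    then show "W x \<noteq> 0" using Qu[OF k1, of 0] unfolding W_def x by auto
  qed
  have core: "\<And>c. (\<Sum>x\<in>adapted_index \<sigma> \<kappa> p. scale (c x) (W x)) = 0 \<Longrightarrow> \<forall>x\<in>adapted_index \<sigma> \<kappa> p. c x = 0"
  proof -
    fix c assume S0: "(\<Sum>x\<in>adapted_index \<sigma> \<kappa> p. scale (c x) (W x)) = 0"
    have eqz: "(\<Sum>x\<in>J. c x * B (W x) (W (pt z))) = 0" if zJ: "z \<in> J" for z
    proof -
      have "0 = B (\<Sum>x\<in>adapted_index \<sigma> \<kappa> p. scale (c x) (W x)) (W (pt z))"
        using S0 B_zero_left[OF assms(6)] by simp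
      also have "\<dots> = (\<Sum>x\<in>J \<union> U. c x * B (W x) (W (pt z)))"
        using B_sum_left[OF assms(6) finI] I_eq by simp
      also have "\<dots> = (\<Sum>x\<in>J. c x * B (W x) (W (pt z))) + (\<Sum>x\<in>U. c x * B (W x) (W (pt z)))"
        using sum.union_disjoint[OF finJ finU JU] by simp
      also have "(\<Sum>x\<in>U. c x * B (W x) (W (pt z))) = 0"
        using uorth[OF _ zJ] by simp
      finally show ?thesis by simp
    qed
    have cJ: "\<forall>z\<in>J. c z = 0"
    proof (rule ccontr)
      assume "\<not> (\<forall>z\<in>J. c z = 0)"
      then have ne: "{z\<in>J. c z \<noteq> 0} \<noteq> {}" by auto
      have finA: "finite {z\<in>J. c z \<noteq> 0}" using finJ by simp
      define m where "m = Max (kf ` {z\<in>J. c z \<noteq> 0})"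
      have "m \<in> kf ` {z\<in>J. c z \<noteq> 0}" unfolding m_def using finA ne by (intro Max_in) auto
      then obtain z where zA: "z \<in> J" "c z \<noteq> 0" and mz: "kf z = m" by auto
      have maxz: "\<And>x. x \<in> J \<Longrightarrow> c x \<noteq> 0 \<Longrightarrow> kf x \<le> kf z"
        unfolding mz m_def using finA by (intro Max_ge) auto
      have "(\<Sum>x\<in>J. c x * B (W x) (W (pt z))) = c z * B (W z) (W (pt z)) + (\<Sum>x\<in>J - {z}. c x * B (W x) (W (pt z)))"
        using sum.remove[OF finJ zA(1)] by simp
      also have "(\<Sum>x\<in>J - {z}. c x * B (W x) (W (pt z))) = 0"
      proof (rule sum.neutral, rule ballI)
        fix x assume x: "x \<in> J - {z}"
        show "c x * B (W x) (W (pt z)) = 0"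
        proof (cases "c x = 0")
          case False
          then have "kf x \<le> kf z" using maxz x by auto
          then have "B (W x) (W (pt z)) = 0" using edge[of x z] x zA by auto
          then show ?thesis by simp
        qed simp
      qed
      finally have "c z * B (W z) (W (pt z)) = 0" using eqz[OF zA(1)] by simp
      then show False using zA diag[OF zA(1)] by simp
    qed
    have "(\<Sum>x\<in>adapted_index \<sigma> \<kappa> p. scale (c x) (W x)) = (\<Sum>x\<in>J. scale (c x) (W x)) + (\<Sum>x\<in>U. scale (c x) (W x))"
      using sum.union_disjoint[OF finJ finU JU] I_eq by simp
    also have "(\<Sum>x\<in>J. scale (c x) (W x)) = 0" using cJ by simp
    finally have SU: "(\<Sum>x\<in>U. scale (c x) (W x)) = 0" using S0 by simp
    have cU: "\<forall>x\<in>U. c x = 0"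
    proof
      fix x assume xU: "x \<in> U"
      then have "U = {x}" unfolding U_def by (auto split: if_splits)
      then have "scale (c x) (W x) = 0" using SU by simp
      then show "c x = 0" using u_nz[OF xU] by simp
    qed
    show "\<forall>x\<in>adapted_index \<sigma> \<kappa> p. c x = 0" using cJ cU I_eq by auto
  qed
  have inj: "inj_on W (adapted_index \<sigma> \<kappa> p)"
  proof (rule inj_onI, rule ccontr)
    fix x y assume xI: "x \<in> adapted_index \<sigma> \<kappa> p" and yI: "y \<in> adapted_index \<sigma> \<kappa> p"
      and eq: "W x = W y" and ne: "x \<noteq> y"
    define c where "c = (\<lambda>v. if v = x then (1::'k) else if v = y then -1 else 0)"
    have "(\<Sum>v\<in>adapted_index \<sigma> \<kappa> p. scale (c v) (W v)) = (\<Sum>v\<in>{x, y}. scale (c v) (W v))"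
      by (rule sum.mono_neutral_right[OF finI]) (use xI yI in \<open>auto simp: c_def\<close>)
    also have "\<dots> = scale 1 (W x) + scale (-1) (W y)" using ne by (simp add: c_def)
    finally have "(\<Sum>v\<in>adapted_index \<sigma> \<kappa> p. scale (c v) (W v)) = W x - W y"
      by simp
    then have "(\<Sum>v\<in>adapted_index \<sigma> \<kappa> p. scale (c v) (W v)) = 0" using eq by simp
    then have "c x = 0" using core xI by blast
    then show False unfolding c_def by simp
  qed
  have indep: "\<not> V.dependent (W ` adapted_index \<sigma> \<kappa> p)"
  proof
    assume dep: "V.dependent (W ` adapted_index \<sigma> \<kappa> p)"
    have finW: "finite (W ` adapted_index \<sigma> \<kappa> p)" using finI by (rule finite_imageI)
    obtain u where u: "\<exists>v\<in>W ` adapted_index \<sigma> \<kappa> p. u v \<noteq> 0"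
      "(\<Sum>v\<in>W ` adapted_index \<sigma> \<kappa> p. scale (u v) v) = 0"
      using dep unfolding V.dependent_finite[OF finW] by (elim exE conjE)
    have re: "(\<Sum>v\<in>W ` adapted_index \<sigma> \<kappa> p. scale (u v) v) = (\<Sum>x\<in>adapted_index \<sigma> \<kappa> p. scale (u (W x)) (W x))"
      using sum.reindex[OF inj, of "\<lambda>v. scale (u v) v"] by (simp only: comp_def)
    have "(\<Sum>x\<in>adapted_index \<sigma> \<kappa> p. scale (u (W x)) (W x)) = 0"
      using u(2) re by simp
    then have "\<forall>x\<in>adapted_index \<sigma> \<kappa> p. u (W x) = 0" by (rule core)
    then show False using u(1) by auto
  qed
  have cardJ: "card J = (\<Sum>t=1..\<sigma>. 2 * p t)"
  proof -
    have "J = Sigma {1..\<sigma>} (\<lambda>t. {0..2 * int (p t) - 1})" unfolding J_def by auto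
    then have "card J = (\<Sum>t=1..\<sigma>. card {0..2 * int (p t) - 1})" by (simp add: card_SigmaI)
    also have "\<dots> = (\<Sum>t=1..\<sigma>. 2 * p t)"
      by (rule sum.cong) (simp_all add: nat_mult_distrib)
    finally show ?thesis .
  qed
  have cardI: "card (W ` adapted_index \<sigma> \<kappa> p) = N"
  proof -
    have "card (W ` adapted_index \<sigma> \<kappa> p) = card (adapted_index \<sigma> \<kappa> p)"
      using card_image[OF inj] .
    also have "\<dots> = card J + card U" using I_eq card_Un_disjoint[OF finJ finU JU] by simp
    also have "card J = 2 * n" using cardJ assms(14) by (simp add: sum_distrib_left[symmetric])
    also have "card U = \<kappa>" unfolding U_def using assms(9) by auto
    finally show ?thesis using assms(5,9,10,11) by auto
  qed
  obtain S where S: "finite S" "V.span S = UNIV" using assms(3) by blast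
  obtain Bs where Bs: "V.independent Bs" "UNIV \<subseteq> V.span Bs"
    using V.maximal_independent_subset[of UNIV] by blast
  have finBs: "finite Bs" using V.independent_span_bound[OF S(1) Bs(1)] S(2) by auto
  interpret FD: finite_dimensional_vector_space scale Bs
    by unfold_locales (use finBs Bs in auto)
  have span: "V.span (W ` adapted_index \<sigma> \<kappa> p) = UNIV"
    using FD.card_ge_dim_independent[of "W ` adapted_index \<sigma> \<kappa> p" UNIV] indep cardI assms(4)
    by auto
  show ?thesis using inj indep span unfolding W_def by simp
qed

end
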